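(* Let $F_W: V^n \to \mathbb{R}^{|V|}$ be a transformer with end-to-end Lipschitz constant $\Lambda(W)$, token embedding $E$, and $C_E = \max_{t,t' \in V}\|E(t)-E(t')\|$. Let $e = (n^*, f, \phi, \tau^*, \varepsilon_{\mathrm{fit}})$ be a parametrized expert, i.e. $n^* \in V^n$, $\phi: V^* \to \mathbb{R}^k$, $f: \mathbb{R}^k \to \mathbb{R}^{|V|}$, $\tau^*>0$, and $\|F_W(n^* ) - f(\phi(n^* ))\| \le \varepsilon_{\mathrm{fit}}$. Assume $\phi$ extracts the parameter vector at the divergence embedding, so that $\|\phi(x) - \phi(n^* )\| \le C_E$ for every input $x$, and that $f$ is Lipschitz with $\mathrm{Lip}(f) \le \Lambda(W)$. Then for every input $x \in V^n$, \[ \|F_W(x) - f(\phi(x))\| \le \varepsilon_{\mathrm{fit}} + 2\Lambda(W) C_E . \] In particular, if $\delta > \varepsilon_{\mathrm{fit}} + 2\Lambda(W) C_E$, then $\|F_W(x) - f(\phi(x))\| \le \delta$ for every input $x$, with no restriction on the trie distance $d_{\mathcal T}(x,n^* )$.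
   Context: $V$ is a finite vocabulary, $P_{\mathcal M}$ a generative model over $V^*$, and the trie metric is $d_{\mathcal T}(s,s') = -\log_2 P_{\mathcal M}(s \wedge s')$ where $s\wedge s'$ is the longest common prefix. $F_W$ is a pre-norm transformer with embedding $E$; $\Lambda(W) = \prod_{\ell=1}^L \kappa^{(\ell)}$ where $\kappa^{(\ell)} = (1 + L_{\mathrm{attn}}^{(\ell)}\gamma^{(\ell)}/\varepsilon_{\mathrm{LN}})(1 + \|W_{\mathrm{MLP}}^{(\ell)}\|_{\mathrm{op}}\gamma^{(\ell)}/\varepsilon_{\mathrm{LN}})$, $L_{\mathrm{attn}}^{(\ell)} = \|W_V^{(\ell)}\|_{\mathrm{op}} + \frac{1}{2\sqrt{d_{\mathrm{head}}}}\|W_Q^{(\ell)}\|_{\mathrm{op}}\|W_K^{(\ell)}\|_{\mathrm{op}}\max_j\|\mathbf v_j\|$ (LayerNorm scale $\gamma^{(\ell)}$, stability constant $\varepsilon_{\mathrm{LN}}$, MLP norm including activation Lipschitz constants). This constant satisfies: for any $s,s'\in V^n$ first differing at position $\bar d+1$, $\|F_W(s)-F_W(s')\| \le \Lambda(W)\|E(s_{\bar d+1}) - E(s'_{\bar d+1})\|$. *)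

theory Defs
  imports "HOL-Analysis.Analysis"
begin

text \<open>Vocabulary V is a finite type 'v; inputs in V^n are lists of length n;
  outputs in R^|V| are vectors of type real^'v; the token embedding is
  E :: 'v => real^'d.\<close>

definition embedding_diameter :: "('v::finite \<Rightarrow> real^'d) \<Rightarrow> real" where
  "embedding_diameter E = Max {norm (E t - E t') | t t'. True}"

text \<open>Two sequences s, s' of length n first differ at position dbar+1
  (0-based index dbar).\<close>
definition first_diff_at :: "'v list \<Rightarrow> 'v list \<Rightarrow> nat \<Rightarrow> bool" where
  "first_diff_at s s' dbar \<longleftrightarrow>
     dbar < length s \<and> dbar < length s' \<and>
     (\<forall>i<dbar. s ! i = s' ! i) \<and> s ! dbar \<noteq> s' ! dbar"

definition end_to_end_lipschitz ::
  "nat \<Rightarrow> ('v list \<Rightarrow> real^'v) \<Rightarrow> ('v \<Rightarrow> real^'d) \<Rightarrow> real \<Rightarrow> bool" where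
  "end_to_end_lipschitz n F E \<Lambda> \<longleftrightarrow>
     (\<forall>s s' dbar. length s = n \<longrightarrow> length s' = n \<longrightarrow> first_diff_at s s' dbar \<longrightarrow>
        norm (F s - F s') \<le> \<Lambda> * norm (E (s ! dbar) - E (s' ! dbar)))"

end

theory Submission
  imports Defs
begin

lemma emb_le: "norm (E a - E b) \<le> embedding_diameter (E :: 'v::finite \<Rightarrow> real^'d)"
proof -
  have "{norm (E t - E t') | t t'. True} = (\<lambda>(t,t'). norm (E t - E t')) ` UNIV" by auto
  hence fin: "finite {norm (E t - E t') | t t'. True}" by simp
  show ?thesis unfolding embedding_diameter_def by (rule Max_ge[OF fin]) blast
qed

lemma first_diff_ex:
  assumes "length x = length y" "x \<noteq> y"
  shows "\<exists>d. first_diff_at x y d"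
proof -
  have "\<exists>i. i < length x \<and> x ! i \<noteq> y ! i" using assms nth_equalityI by blast
  then obtain i where i: "i < length x \<and> x ! i \<noteq> y ! i \<and> (\<forall>j<i. \<not>(j < length x \<and> x ! j \<noteq> y ! j))"
    using exists_least_iff[of "\<lambda>i. i < length x \<and> x ! i \<noteq> y ! i"] by blast
  have "first_diff_at x y i" unfolding first_diff_at_def using i assms(1) by auto
  thus ?thesis by blast
qed

theorem mainTheorem2:
  fixes n :: nat
    and F :: "'v::finite list \<Rightarrow> real^'v"
    and E :: "'v \<Rightarrow> real^'d"
    and \<Lambda> :: real
    and nstar :: "'v list"
    and f :: "real^'k \<Rightarrow> real^'v"
    and \<phi> :: "'v list \<Rightarrow> real^'k"
    and \<tau>star \<epsilon>fit :: real
  assumes lip: "end_to_end_lipschitz n F E \<Lambda>"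
    and nstar_len: "length nstar = n"
    and tau_pos: "\<tau>star > 0"
    and fit: "norm (F nstar - f (\<phi> nstar)) \<le> \<epsilon>fit"
    and phi_bound: "\<forall>x. length x = n \<longrightarrow> norm (\<phi> x - \<phi> nstar) \<le> embedding_diameter E"
    and f_lip: "\<Lambda>-lipschitz_on UNIV f"
  shows "(\<forall>x. length x = n \<longrightarrow>
            norm (F x - f (\<phi> x)) \<le> \<epsilon>fit + 2 * \<Lambda> * embedding_diameter E)
       \<and> (\<forall>\<delta>. \<delta> > \<epsilon>fit + 2 * \<Lambda> * embedding_diameter E \<longrightarrow>
            (\<forall>x. length x = n \<longrightarrow> norm (F x - f (\<phi> x)) \<le> \<delta>))"
proof -
  let ?C = "embedding_diameter E"
  have L0: "0 \<le> \<Lambda>" using f_lip lipschitz_on_nonneg by blast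
  have C0: "0 \<le> ?C" using emb_le[of E undefined undefined] by simp
  have main: "norm (F x - f (\<phi> x)) \<le> \<epsilon>fit + 2 * \<Lambda> * ?C" if xl: "length x = n" for x
  proof -
    have A: "norm (F x - F nstar) \<le> \<Lambda> * ?C"
    proof (cases "x = nstar")
      case True thus ?thesis using L0 C0 by simp
    next
      case False
      then obtain d where d: "first_diff_at x nstar d" using first_diff_ex xl nstar_len by metis
      have "norm (F x - F nstar) \<le> \<Lambda> * norm (E (x ! d) - E (nstar ! d))"
        using lip d xl nstar_len unfolding end_to_end_lipschitz_def by blast
      also have "\<dots> \<le> \<Lambda> * ?C" using L0 emb_le by (rule mult_left_mono[rotated])
      finally show ?thesis .
    qed
    have B: "norm (f (\<phi> nstar) - f (\<phi> x)) \<le> \<Lambda> * ?C"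
    proof -
      have "dist (f (\<phi> nstar)) (f (\<phi> x)) \<le> \<Lambda> * dist (\<phi> nstar) (\<phi> x)"
        using f_lip lipschitz_onD by blast
      also have "\<dots> \<le> \<Lambda> * ?C"
      proof -
        have "norm (\<phi> x - \<phi> nstar) \<le> ?C" using phi_bound xl by blast
        moreover have "dist (\<phi> nstar) (\<phi> x) = norm (\<phi> x - \<phi> nstar)" unfolding dist_norm by (rule norm_minus_commute)
        ultimately have "dist (\<phi> nstar) (\<phi> x) \<le> ?C" by simp
        thus ?thesis using L0 by (rule mult_left_mono)
      qed
      finally show ?thesis by (simp add: dist_norm)
    qed
    have "F x - f (\<phi> x) = (F x - F nstar) + (F nstar - f (\<phi> nstar)) + (f (\<phi> nstar) - f (\<phi> x))"
      by simp
    hence "norm (F x - f (\<phi> x)) \<le> norm ((F x - F nstar) + (F nstar - f (\<phi> nstar))) + norm (f (\<phi> nstar) - f (\<phi> x))"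
      by (metis norm_triangle_ineq)
    moreover have "norm ((F x - F nstar) + (F nstar - f (\<phi> nstar))) \<le> norm (F x - F nstar) + norm (F nstar - f (\<phi> nstar))"
      by (rule norm_triangle_ineq)
    ultimately show ?thesis using A B fit by linarith
  qed
  show ?thesis
  proof (intro conjI allI impI)
    fix x :: "'v list" assume "length x = n" thus "norm (F x - f (\<phi> x)) \<le> \<epsilon>fit + 2 * \<Lambda> * ?C" by (rule main)
  next
    fix \<delta> and x :: "'v list" assume "\<delta> > \<epsilon>fit + 2 * \<Lambda> * ?C" "length x = n"
    thus "norm (F x - f (\<phi> x)) \<le> \<delta>" using main[of x] by linarith
  qed
qed

end
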